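(* Let $n$ be a positive integer, let $\theta=\lambda/\mu$ be a skew Young diagram such that every column of $\theta$ contains at most $n$ boxes, and let $\beta$ be a nonzero complex number. Then $$G_\theta(\beta,\dots,\beta\mid -\beta^{-1})=\beta^{|\theta|},$$ where all $n$ variables are specialized to $\beta$.
   Context: Partitions are identified with Young diagrams $\{(i,j)\in\mathbb{Z}_{>0}^2 : j\le\lambda_i\}$ (row index $i$ increasing downward). For partitions $\mu\subseteq\lambda$, $\theta=\lambda/\mu=\lambda\setminus\mu$ and $|\theta|$ is its number of boxes. A set-valued tableau of shape $\theta$ with entries in $[n]=\{1,\dots,n\}$ assigns a non-empty subset $T_{i,j}\subseteq[n]$ to each box $(i,j)\in\theta$ such that $\max T_{i,j}\le\min T_{i,j+1}$ whenever $(i,j),(i,j+1)\in\theta$ and $\max T_{i,j}<\min T_{i+1,j}$ whenever $(i,j),(i+1,j)\in\theta$; $\mathrm{SVT}(\theta,n)$ is the set of these. For such $T$, $|T|=\sum_{(i,j)\in\theta}|T_{i,j}|$, $\omega_k(T)$ is the number of boxes whose set contains $k$, and $x^{\omega(T)}=\prod_{k=1}^n x_k^{\omega_k(T)}$. The skew Grothendieck polynomial is $G_\theta(x_1,\dots,x_n\mid\beta)=\sum_{T\in\mathrm{SVT}(\theta,n)}\beta^{|T|-|\theta|}x^{\omega(T)}$. *)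

theory Defs
  imports Complex_Main
begin

definition is_partition :: "nat list \<Rightarrow> bool" where
  "is_partition lam \<longleftrightarrow> sorted_wrt (\<ge>) lam \<and> (\<forall>p\<in>set lam. 0 < p)"

definition young :: "nat list \<Rightarrow> (nat \<times> nat) set" where
  "young lam = {(i, j). 1 \<le> i \<and> i \<le> length lam \<and> 1 \<le> j \<and> j \<le> lam ! (i - 1)}"

definition skew :: "nat list \<Rightarrow> nat list \<Rightarrow> (nat \<times> nat) set" where
  "skew lam mu = young lam - young mu"

definition SVT :: "(nat \<times> nat) set \<Rightarrow> nat \<Rightarrow> ((nat \<times> nat) \<Rightarrow> nat set) set" where
  "SVT theta n = {T.
     (\<forall>b. b \<notin> theta \<longrightarrow> T b = {}) \<and>
     (\<forall>b\<in>theta. T b \<noteq> {} \<and> T b \<subseteq> {1..n}) \<and>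
     (\<forall>i j. (i, j) \<in> theta \<and> (i, j + 1) \<in> theta \<longrightarrow> Max (T (i, j)) \<le> Min (T (i, j + 1))) \<and>
     (\<forall>i j. (i, j) \<in> theta \<and> (i + 1, j) \<in> theta \<longrightarrow> Max (T (i, j)) < Min (T (i + 1, j))) }"

definition tsize :: "(nat \<times> nat) set \<Rightarrow> ((nat \<times> nat) \<Rightarrow> nat set) \<Rightarrow> nat" where
  "tsize theta T = (\<Sum>b\<in>theta. card (T b))"

definition omega :: "(nat \<times> nat) set \<Rightarrow> ((nat \<times> nat) \<Rightarrow> nat set) \<Rightarrow> nat \<Rightarrow> nat" where
  "omega theta T k = card {b\<in>theta. k \<in> T b}"

definition groth :: "(nat \<times> nat) set \<Rightarrow> nat \<Rightarrow> (nat \<Rightarrow> complex) \<Rightarrow> complex \<Rightarrow> complex" where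
  "groth theta n x beta =
     (\<Sum>T\<in>SVT theta n. beta ^ (tsize theta T - card theta) * (\<Prod>k=1..n. x k ^ omega theta T k))"

end

theory Submission
  imports Defs
begin

definition PP :: "(nat \<times> nat) set \<Rightarrow> bool" where
  "PP th \<longleftrightarrow> (\<forall>i j. (i,j)\<in>th \<and> (i,j+1)\<in>th \<and> (i+1,j+1)\<in>th \<longrightarrow> (i+1,j)\<in>th)"

definition Dset :: "(nat \<times> nat) set \<Rightarrow> (nat \<times> nat) set" where
  "Dset th = {(i,j). (i,j)\<in>th \<and> (i+1,j)\<notin>th}"

definition Kset :: "(nat \<times> nat) set \<Rightarrow> nat \<Rightarrow> ((nat \<times> nat) \<Rightarrow> nat set) \<Rightarrow> (nat \<times> nat) set" where
  "Kset th n T = {(i,j). (i,j)\<in>Dset th \<and> T (i,j) \<noteq> {n} \<and> ((i,j+1)\<in>th \<longrightarrow> T (i,j+1) = {n})}"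

definition tog :: "nat \<Rightarrow> nat set \<Rightarrow> nat set" where
  "tog n X = (if n \<in> X then X - {n} else insert n X)"

definition invo :: "(nat \<times> nat) set \<Rightarrow> nat \<Rightarrow> ((nat \<times> nat) \<Rightarrow> nat set) \<Rightarrow> ((nat \<times> nat) \<Rightarrow> nat set)" where
  "invo th n T = (let b = (SOME b. b \<in> Kset th n T) in T(b := tog n (T b)))"

definition sg :: "(nat \<times> nat) set \<Rightarrow> ((nat \<times> nat) \<Rightarrow> nat set) \<Rightarrow> int" where
  "sg th T = (-1) ^ (tsize th T - card th)"

lemma SVT_finite:
  assumes "finite th" shows "finite (SVT th n)"
proof -
  have "SVT th n \<subseteq> {f. \<forall>x. (x \<in> th \<longrightarrow> f x \<in> Pow {1..n}) \<and> (x \<notin> th \<longrightarrow> f x = {})}"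
    unfolding SVT_def by auto
  moreover have "finite {f. \<forall>x. (x \<in> th \<longrightarrow> f x \<in> Pow {1..n}) \<and> (x \<notin> th \<longrightarrow> f x = ({}::nat set))}"
    by (rule finite_set_of_finite_funs) (use assms in auto)
  ultimately show ?thesis by (rule finite_subset)
qed

lemma tsize_ge:
  assumes "T \<in> SVT th n" "finite th" shows "card th \<le> tsize th T"
proof -
  have "card th = (\<Sum>b\<in>th. 1)" by simp
  also have "\<dots> \<le> (\<Sum>b\<in>th. card (T b))"
  proof (rule sum_mono)
    fix b assume "b \<in> th"
    with assms have "T b \<noteq> {}" "T b \<subseteq> {1..n}" unfolding SVT_def by auto
    then show "1 \<le> card (T b)" by (meson card_0_eq finite_atLeastAtMost finite_subset less_one not_le)
  qed
  finally show ?thesis unfolding tsize_def .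
qed

lemma tog_props:
  assumes "X \<noteq> {}" "X \<subseteq> {1..n}" "X \<noteq> {n}" "1 \<le> n"
  shows "tog n X \<noteq> {}" "tog n X \<subseteq> {1..n}" "tog n X \<noteq> {n}" "Min (tog n X) = Min X"
    "tog n (tog n X) = X" "finite X"
    "card (tog n X) = card X + 1 \<or> card X = card (tog n X) + 1"
proof -
  have fX: "finite X" using assms(2) finite_subset by blast
  then show "finite X" .
  obtain x where x: "x \<in> X" "x < n" using assms(1-3) by fastforce
  have mX: "Min X < n" using fX x Min_le[of X x] by linarith
  show "tog n X \<noteq> {}" "tog n X \<subseteq> {1..n}" "tog n X \<noteq> {n}" using assms x unfolding tog_def by auto
  show "Min (tog n X) = Min X"
  proof (cases "n \<in> X")
    case True
    have "Min X \<in> X - {n}" using mX fX assms(1) by auto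
    then have "Min (X - {n}) \<le> Min X" using fX by auto
    moreover have "Min X \<le> Min (X - {n})" using fX x True
      by (metis Min_antimono Diff_subset \<open>Min X \<in> X - {n}\<close> empty_iff finite_Diff)
    ultimately show ?thesis unfolding tog_def using True by simp
  next
    case False
    have "Min (insert n X) = min n (Min X)" using fX assms(1) by simp
    then show ?thesis unfolding tog_def using False mX by simp
  qed
  show "tog n (tog n X) = X" unfolding tog_def by auto
  show "card (tog n X) = card X + 1 \<or> card X = card (tog n X) + 1"
    unfolding tog_def using fX
    by (auto simp: card_insert_if card_Diff_singleton)
       (metis One_nat_def Suc_pred card_gt_0_iff emptyE)
qed

lemma invo_facts:
  assumes T: "T \<in> SVT th n" and K: "Kset th n T \<noteq> {}" and n: "1 \<le> n" and fin: "finite th"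
  shows "invo th n T \<in> SVT th n" "Kset th n (invo th n T) = Kset th n T"
    "invo th n (invo th n T) = T" "sg th (invo th n T) = - sg th T"
proof -
  define b where "b = (SOME b. b \<in> Kset th n T)"
  have bK: "b \<in> Kset th n T" unfolding b_def using K some_in_eq by blast
  obtain i0 j0 where bij: "b = (i0, j0)" by fastforce
  have b1: "(i0,j0) \<in> th" "(i0+1,j0) \<notin> th" "T (i0,j0) \<noteq> {n}"
    "(i0,j0+1)\<in>th \<Longrightarrow> T (i0,j0+1) = {n}"
    using bK unfolding bij Kset_def Dset_def by auto
  have Tb: "T b \<noteq> {}" "T b \<subseteq> {1..n}" using T b1(1) unfolding SVT_def bij by auto
  note tp = tog_props[OF Tb b1(3)[folded bij] n]
  have inv_eq: "invo th n T = T(b := tog n (T b))" unfolding invo_def b_def Let_def by simp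
  define T' where "T' = T(b := tog n (T b))"
  have TS: "\<forall>c. c \<notin> th \<longrightarrow> T c = {}" "\<forall>c\<in>th. T c \<noteq> {} \<and> T c \<subseteq> {1..n}"
    "\<forall>i j. (i, j) \<in> th \<and> (i, j + 1) \<in> th \<longrightarrow> Max (T (i, j)) \<le> Min (T (i, j + 1))"
    "\<forall>i j. (i, j) \<in> th \<and> (i + 1, j) \<in> th \<longrightarrow> Max (T (i, j)) < Min (T (i + 1, j))"
    using T unfolding SVT_def by auto
  have maxb: "Max (T' b) \<le> n" using tp(1,2) unfolding T'_def
    by (auto simp add: Max_le_iff finite_subset[OF tp(2)])
  have T'S: "T' \<in> SVT th n"
    unfolding SVT_def mem_Collect_eq
  proof (intro conjI allI impI ballI)
    fix c assume "c \<notin> th" then show "T' c = {}" using TS(1) b1(1) bij unfolding T'_def by (metis fun_upd_other)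
  next
    fix c assume "c \<in> th" then show "T' c \<noteq> {}" "T' c \<subseteq> {1..n}"
      using TS(2) tp unfolding T'_def by auto
  next
    fix i j assume a: "(i, j) \<in> th \<and> (i, j + 1) \<in> th"
    show "Max (T' (i, j)) \<le> Min (T' (i, j + 1))"
    proof (cases "(i,j) = b")
      case True
      then have "T' (i,j+1) = {n}" using b1(4) a bij unfolding T'_def by auto
      then show ?thesis using maxb True by simp
    next
      case False
      then show ?thesis
      proof (cases "(i,j+1) = b")
        case True
        then show ?thesis using False TS(3) a tp(4) unfolding T'_def by auto
      next
        case False2: False
        then show ?thesis using False TS(3) a unfolding T'_def by auto
      qed
    qed
  next
    fix i j assume a: "(i, j) \<in> th \<and> (i + 1, j) \<in> th"
    have "(i,j) \<noteq> b" using a b1(2) bij by auto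
    then show "Max (T' (i, j)) < Min (T' (i + 1, j))"
      using TS(4) a tp(4) unfolding T'_def by auto
  qed
  then show "invo th n T \<in> SVT th n" using inv_eq T'_def by simp
  have KK: "Kset th n T' = Kset th n T"
    unfolding Kset_def T'_def using tp(3) b1(3) bij by (auto split: if_splits)
  then show "Kset th n (invo th n T) = Kset th n T" using inv_eq T'_def by simp
  have "invo th n T' = T'(b := tog n (T' b))" unfolding invo_def KK b_def Let_def by simp
  also have "\<dots> = T" unfolding T'_def using tp(5) by auto
  finally show "invo th n (invo th n T) = T" using inv_eq T'_def by simp
  have ts: "tsize th T' + card (T b) = tsize th T + card (T' b)"
  proof -
    have "tsize th T' = card (T' b) + (\<Sum>c\<in>th - {b}. card (T' c))"
      unfolding tsize_def using fin b1(1) bij by (simp add: sum.remove)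
    moreover have "tsize th T = card (T b) + (\<Sum>c\<in>th - {b}. card (T c))"
      unfolding tsize_def using fin b1(1) bij by (simp add: sum.remove)
    moreover have "(\<Sum>c\<in>th - {b}. card (T' c)) = (\<Sum>c\<in>th - {b}. card (T c))"
      unfolding T'_def by (rule sum.cong) auto
    ultimately show ?thesis by simp
  qed
  have g1: "card th \<le> tsize th T" "card th \<le> tsize th T'" using tsize_ge T T'S fin by auto
  have T'b: "T' b = tog n (T b)" unfolding T'_def by simp
  have "tsize th T' = tsize th T + 1 \<or> tsize th T = tsize th T' + 1"
    using tp(7) ts unfolding T'b by linarith
  then have "sg th T' = - sg th T"
  proof
    assume "tsize th T' = tsize th T + 1"
    then show ?thesis using g1 unfolding sg_def by (simp add: Suc_diff_le)
  next
    assume "tsize th T = tsize th T' + 1"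
    then show ?thesis using g1 unfolding sg_def by (simp add: Suc_diff_le)
  qed
  then show "sg th (invo th n T) = - sg th T" using inv_eq T'_def by simp
qed

lemma sum_nonfixed:
  assumes n: "1 \<le> n" and fin: "finite th"
  shows "(\<Sum>T\<in>{T\<in>SVT th n. Kset th n T \<noteq> {}}. sg th T) = 0"
proof -
  let ?S = "{T\<in>SVT th n. Kset th n T \<noteq> {}}"
  have "(\<Sum>T\<in>?S. sg th T) = (\<Sum>T\<in>?S. - sg th T)"
  proof (rule sum.reindex_bij_witness[where i = "invo th n" and j = "invo th n"])
    fix T assume "T \<in> ?S"
    then show "invo th n (invo th n T) = T" "invo th n T \<in> ?S" "- sg th (invo th n T) = sg th T"
      using invo_facts[OF _ _ n fin, of T] by auto
  next
    fix T assume "T \<in> ?S"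
    then show "invo th n (invo th n T) = T" "invo th n T \<in> ?S"
      using invo_facts[OF _ _ n fin, of T] by auto
  qed
  then have "(\<Sum>T\<in>?S. sg th T) = - (\<Sum>T\<in>?S. sg th T)" by (simp add: sum_negf)
  then show ?thesis by simp
qed

lemma fixed_D:
  assumes T: "T \<in> SVT th n" and K: "Kset th n T = {}" and P: "PP th" and fin: "finite th"
  shows "\<forall>b\<in>Dset th. T b = {n}"
proof (rule ccontr)
  let ?B = "{b\<in>Dset th. T b \<noteq> {n}}"
  assume "\<not> ?thesis"
  then have ne: "?B \<noteq> {}" by auto
  have fB: "finite ?B" using fin unfolding Dset_def by (auto intro: finite_subset)
  define m where "m = Max (snd ` ?B)"
  have "m \<in> snd ` ?B" unfolding m_def using fB ne by simp
  then obtain i where iB: "(i, m) \<in> ?B" by force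
  have mx: "\<And>c. c \<in> ?B \<Longrightarrow> snd c \<le> m" unfolding m_def using fB by simp
  have "(i,m) \<notin> Kset th n T" using K by simp
  then have r: "(i, m+1) \<in> th" "T (i, m+1) \<noteq> {n}" using iB unfolding Kset_def by auto
  have "(i, m) \<in> th" "(i+1, m) \<notin> th" using iB unfolding Dset_def by auto
  then have "(i+1, m+1) \<notin> th" using P r(1) unfolding PP_def by blast
  then have "(i, m+1) \<in> ?B" using r unfolding Dset_def by auto
  then show False using mx by fastforce
qed

lemma D_sub: "Dset th \<subseteq> th" unfolding Dset_def by auto

lemma fixed_bij:
  assumes P: "PP th" and fin: "finite th"
  shows "(\<Sum>T\<in>{T\<in>SVT th (Suc m). Kset th (Suc m) T = {}}. sg th T) =
         (\<Sum>T\<in>SVT (th - Dset th) m. sg (th - Dset th) T)"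
proof -
  let ?D = "Dset th" and ?n = "Suc m"
  let ?th' = "th - Dset th"
  let ?S = "{T\<in>SVT th (Suc m). Kset th (Suc m) T = {}}"
  define ext where "ext = (\<lambda>T' c. if c \<in> ?D then {?n} else T' c)"
  define restr where "restr = (\<lambda>(T::nat\<times>nat \<Rightarrow> nat set) c. if c \<in> ?D then {} else T c)"
  have rowD: "(i, j+1) \<in> ?D" if "(i,j) \<in> ?D" "(i,j+1) \<in> th" for i j
    using that P unfolding Dset_def PP_def by blast
  have fixS: "T c = {?n}" if "T \<in> ?S" "c \<in> ?D" for T c
    using fixed_D[OF _ _ P fin, of T ?n] that by auto
  have notn: "x < ?n" if "T \<in> SVT th ?n" "c \<in> ?th'" "x \<in> T c" for T c x
  proof -
    obtain i j where c: "c = (i,j)" by fastforce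
    have a: "(i,j) \<in> th" "(i+1,j) \<in> th" using that(2) c unfolding Dset_def by auto
    have "Max (T (i,j)) < Min (T (i+1,j))" using that(1) a unfolding SVT_def by auto
    moreover have "T (i+1,j) \<noteq> {}" "T (i+1,j) \<subseteq> {1..?n}" "T (i,j) \<subseteq> {1..?n}"
      using that(1) a unfolding SVT_def by auto
    moreover have "x \<le> Max (T (i,j))" using that(3) c calculation(4)
      by (simp add: finite_subset)
    moreover have "Min (T (i+1,j)) \<le> ?n" using calculation(2,3)
      by (meson Min_in atLeastAtMost_iff finite_atLeastAtMost finite_subset subsetD)
    ultimately show ?thesis by linarith
  qed
  show ?thesis
  proof (rule sum.reindex_bij_witness[where i = ext and j = restr])
    fix T assume TS: "T \<in> ?S"
    show "ext (restr T) = T" unfolding ext_def restr_def using fixS[OF TS] by (intro ext) auto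
    show "restr T \<in> SVT ?th' m"
      unfolding SVT_def mem_Collect_eq
    proof (intro conjI allI impI ballI)
      fix c assume c: "c \<notin> ?th'"
      have "\<forall>c. c \<notin> th \<longrightarrow> T c = {}" using TS unfolding SVT_def by blast
      then show "restr T c = {}" using c unfolding restr_def by (metis DiffI)
    next
      fix c assume c: "c \<in> ?th'"
      then show "restr T c \<noteq> {}" using TS unfolding restr_def SVT_def by auto
      have "T c \<subseteq> {1..?n}" using TS c unfolding SVT_def by auto
      moreover have "\<forall>x\<in>T c. x < ?n" using notn TS c by blast
      ultimately show "restr T c \<subseteq> {1..m}" using c unfolding restr_def by fastforce
    next
      fix i j assume "(i, j) \<in> ?th' \<and> (i, j + 1) \<in> ?th'"
      then show "Max (restr T (i, j)) \<le> Min (restr T (i, j + 1))"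
        using TS unfolding restr_def SVT_def by auto
    next
      fix i j assume "(i, j) \<in> ?th' \<and> (i + 1, j) \<in> ?th'"
      then show "Max (restr T (i, j)) < Min (restr T (i + 1, j))"
        using TS unfolding restr_def SVT_def by auto
    qed
    show "sg ?th' (restr T) = sg th T"
    proof -
      have "tsize th T = (\<Sum>c\<in>?th'. card (T c)) + (\<Sum>c\<in>?D. card (T c))"
        unfolding tsize_def using fin D_sub
        by (metis Diff_partition Diff_disjoint finite_Diff finite_subset inf_commute sum.union_disjoint add.commute)
      also have "(\<Sum>c\<in>?D. card (T c)) = card ?D" using fixS[OF TS] by simp
      also have "(\<Sum>c\<in>?th'. card (T c)) = tsize ?th' (restr T)"
        unfolding tsize_def restr_def by (rule sum.cong) auto
      finally have "tsize th T = tsize ?th' (restr T) + card ?D" .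
      moreover have "card th = card ?th' + card ?D" using fin D_sub
        by (metis card_Diff_subset finite_subset le_add_diff_inverse2 card_mono)
      ultimately show ?thesis unfolding sg_def by simp
    qed
  next
    fix T' assume TS: "T' \<in> SVT ?th' m"
    have T'S: "\<forall>c. c \<notin> ?th' \<longrightarrow> T' c = {}" "\<forall>c\<in>?th'. T' c \<noteq> {} \<and> T' c \<subseteq> {1..m}"
      "\<forall>i j. (i, j) \<in> ?th' \<and> (i, j + 1) \<in> ?th' \<longrightarrow> Max (T' (i, j)) \<le> Min (T' (i, j + 1))"
      "\<forall>i j. (i, j) \<in> ?th' \<and> (i + 1, j) \<in> ?th' \<longrightarrow> Max (T' (i, j)) < Min (T' (i + 1, j))"
      using TS unfolding SVT_def by auto
    have mx: "Max (T' c) < ?n" if "c \<in> ?th'" for c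
    proof -
      have "T' c \<noteq> {}" "T' c \<subseteq> {1..m}" using T'S(2) that by auto
      then show ?thesis by (meson Max_in atLeastAtMost_iff finite_atLeastAtMost finite_subset le_imp_less_Suc subsetD)
    qed
    show "restr (ext T') = T'" unfolding ext_def restr_def
    proof (intro ext)
      fix c show "(if c \<in> ?D then {} else if c \<in> ?D then {?n} else T' c) = T' c"
        using T'S(1) by (metis DiffD2)
    qed
    have eS: "ext T' \<in> SVT th ?n"
      unfolding SVT_def mem_Collect_eq
    proof (intro conjI allI impI ballI)
      fix c assume c: "c \<notin> th"
      then have "c \<notin> ?D" "c \<notin> ?th'" using D_sub by auto
      then show "ext T' c = {}" using T'S(1) unfolding ext_def by metis
    next
      fix c assume c: "c \<in> th"
      show "ext T' c \<noteq> {}" using T'S(2) c unfolding ext_def by auto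
      show "ext T' c \<subseteq> {1..?n}"
      proof (cases "c \<in> ?D")
        case False
        then have "T' c \<subseteq> {1..m}" using T'S(2) c by blast
        then show ?thesis using False unfolding ext_def by auto
      qed (auto simp: ext_def)
    next
      fix i j assume a: "(i, j) \<in> th \<and> (i, j + 1) \<in> th"
      show "Max (ext T' (i, j)) \<le> Min (ext T' (i, j + 1))"
      proof (cases "(i,j) \<in> ?D")
        case True
        then have "(i,j+1) \<in> ?D" using rowD a by blast
        then show ?thesis using True unfolding ext_def by simp
      next
        case False
        then have "(i,j) \<in> ?th'" using a by auto
        then show ?thesis using T'S(3) mx[of "(i,j)"] False a unfolding ext_def by auto
      qed
    next
      fix i j assume a: "(i, j) \<in> th \<and> (i + 1, j) \<in> th"
      then have nd: "(i,j) \<in> ?th'" unfolding Dset_def by auto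
      show "Max (ext T' (i, j)) < Min (ext T' (i + 1, j))"
        using T'S(4) mx[OF nd] a nd unfolding ext_def by auto
    qed
    moreover have "Kset th ?n (ext T') = {}" unfolding Kset_def ext_def by auto
    ultimately show "ext T' \<in> ?S" by simp
  qed
qed

lemma PP_step: assumes "PP th" shows "PP (th - Dset th)"
  unfolding PP_def
proof (intro allI impI)
  fix i j assume a: "(i, j) \<in> th - Dset th \<and> (i, j + 1) \<in> th - Dset th \<and> (i + 1, j + 1) \<in> th - Dset th"
  have pp: "\<And>i j. (i,j)\<in>th \<Longrightarrow> (i,j+1)\<in>th \<Longrightarrow> (i+1,j+1)\<in>th \<Longrightarrow> (i+1,j)\<in>th"
    using assms unfolding PP_def by blast
  have h1: "(i+1,j) \<in> th" using a pp by blast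
  have h2: "(i+1+1,j+1) \<in> th" using a unfolding Dset_def by auto
  have "(i+1+1,j) \<in> th" by (rule pp[OF h1]) (use a h2 in auto)
  then show "(i + 1, j) \<in> th - Dset th" using h1 unfolding Dset_def by simp
qed

lemma col_step:
  assumes fin: "finite th" and c: "card {i. (i,j) \<in> th} \<le> Suc m"
  shows "card {i. (i,j) \<in> th - Dset th} \<le> m"
proof -
  let ?C = "{i. (i,j) \<in> th}"
  have fC: "finite ?C"
  proof -
    have "?C \<subseteq> fst ` th" by force
    then show ?thesis using fin finite_subset by blast
  qed
  show ?thesis
  proof (cases "?C = {}")
    case True
    then show ?thesis by auto
  next
    case False
    define i0 where "i0 = Max ?C"
    have i0: "i0 \<in> ?C" unfolding i0_def using Max_in[OF fC False] .
    have "i0 + 1 \<notin> ?C" unfolding i0_def using fC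
      by (metis Max_ge Suc_eq_plus1 i0_def not_less_eq_eq order_refl)
    then have "(i0, j) \<in> Dset th" using i0 unfolding Dset_def by simp
    then have "{i. (i,j) \<in> th - Dset th} \<subseteq> ?C - {i0}" by auto
    then have "card {i. (i,j) \<in> th - Dset th} \<le> card (?C - {i0})"
      using fC by (simp add: card_mono)
    also have "\<dots> = card ?C - 1" using i0 fC by simp
    finally show ?thesis using c by linarith
  qed
qed

lemma main_sum:
  assumes "finite th" "PP th" "\<forall>j. card {i. (i,j) \<in> th} \<le> n"
  shows "(\<Sum>T\<in>SVT th n. sg th T) = 1"
  using assms
proof (induction n arbitrary: th)
  case 0
  have "th = {}"
  proof (rule ccontr)
    assume "th \<noteq> {}"
    then obtain i j where ij: "(i,j) \<in> th" by auto
    have "{i. (i,j) \<in> th} \<subseteq> fst ` th" by force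
    then have "finite {i. (i,j) \<in> th}" using 0(1) finite_subset by blast
    then have "card {i. (i,j) \<in> th} > 0" using ij card_gt_0_iff by blast
    then show False using 0(3) by (metis not_le)
  qed
  moreover have "SVT {} 0 = {\<lambda>_. {}}" unfolding SVT_def by auto
  ultimately show ?case unfolding sg_def tsize_def by simp
next
  case (Suc m)
  let ?S = "SVT th (Suc m)"
  have fS: "finite ?S" using SVT_finite Suc(2) by blast
  have split: "?S = {T\<in>?S. Kset th (Suc m) T = {}} \<union> {T\<in>?S. Kset th (Suc m) T \<noteq> {}}" by auto
  have "(\<Sum>T\<in>?S. sg th T) = (\<Sum>T\<in>{T\<in>?S. Kset th (Suc m) T = {}}. sg th T) +
      (\<Sum>T\<in>{T\<in>?S. Kset th (Suc m) T \<noteq> {}}. sg th T)"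
    by (subst split, rule sum.union_disjoint) (use fS in auto)
  also have "(\<Sum>T\<in>{T\<in>?S. Kset th (Suc m) T \<noteq> {}}. sg th T) = 0"
    by (rule sum_nonfixed) (use Suc(2) in auto)
  also have "(\<Sum>T\<in>{T\<in>?S. Kset th (Suc m) T = {}}. sg th T) =
             (\<Sum>T\<in>SVT (th - Dset th) m. sg (th - Dset th) T)"
    by (rule fixed_bij) (use Suc in auto)
  also have "\<dots> = 1"
    by (rule Suc.IH) (use Suc.prems PP_step col_step in auto)
  finally show ?case by simp
qed

lemma young_finite: "finite (young lam)"
proof -
  have "young lam \<subseteq> {..length lam} \<times> {..Max (insert 0 (set lam))}"
  proof
    fix x assume "x \<in> young lam"
    then obtain i j where x: "x = (i,j)" "1 \<le> i" "i \<le> length lam" "j \<le> lam ! (i - 1)"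
      unfolding young_def by auto
    then have "lam ! (i - 1) \<in> set lam" by auto
    then have "lam ! (i-1) \<le> Max (insert 0 (set lam))" by simp
    then have "j \<le> Max (insert 0 (set lam))" using x(4) by linarith
    then show "x \<in> {..length lam} \<times> {..Max (insert 0 (set lam))}" using x by auto
  qed
  then show ?thesis by (rule finite_subset) auto
qed

lemma skew_PP: assumes "is_partition mu" shows "PP (skew lam mu)"
  unfolding PP_def
proof (intro allI impI)
  fix i j assume a: "(i, j) \<in> skew lam mu \<and> (i, j + 1) \<in> skew lam mu \<and> (i + 1, j + 1) \<in> skew lam mu"
  have y1: "(i+1,j) \<in> young lam" using a unfolding skew_def young_def by auto
  have "(i+1,j) \<notin> young mu"
  proof
    assume "(i+1,j) \<in> young mu"
    then have m: "i + 1 \<le> length mu" "j \<le> mu ! i" unfolding young_def by auto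
    have i1: "1 \<le> i" "1 \<le> j" using a unfolding skew_def young_def by auto
    have srt: "sorted_wrt (\<ge>) mu" using assms unfolding is_partition_def by blast
    have "i - 1 < i" "i < length mu" using i1 m(1) by auto
    then have "mu ! i \<le> mu ! (i - 1)" using sorted_wrt_nth_less[OF srt] by blast
    then have "(i,j) \<in> young mu" using m i1 unfolding young_def by auto
    then show False using a unfolding skew_def by auto
  qed
  then show "(i + 1, j) \<in> skew lam mu" using y1 unfolding skew_def by auto
qed

lemma omega_sum:
  assumes T: "T \<in> SVT th n" and fin: "finite th"
  shows "(\<Sum>k=1..n. omega th T k) = tsize th T"
proof -
  have "(\<Sum>k=1..n. omega th T k) = (\<Sum>k=1..n. \<Sum>b\<in>th. if k \<in> T b then 1 else 0)"
    unfolding omega_def using fin by (simp add: sum.inter_filter[symmetric])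
  also have "\<dots> = (\<Sum>b\<in>th. \<Sum>k=1..n. if k \<in> T b then 1 else 0)" by (rule sum.swap)
  also have "\<dots> = (\<Sum>b\<in>th. card (T b))"
  proof (rule sum.cong)
    fix b assume "b \<in> th"
    then have sub: "T b \<subseteq> {1..n}" using T unfolding SVT_def by auto
    have "(\<Sum>k=1..n. if k \<in> T b then 1 else (0::nat)) = card {k\<in>{1..n}. k \<in> T b}"
      by (simp add: sum.inter_filter[symmetric])
    also have "{k\<in>{1..n}. k \<in> T b} = T b" using sub by auto
    finally show "(\<Sum>k=1..n. if k \<in> T b then 1 else (0::nat)) = card (T b)" .
  qed simp
  finally show ?thesis unfolding tsize_def .
qed

theorem theoremB1:
  fixes n :: nat and lam mu :: "nat list" and beta :: complex
  assumes "0 < n"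
    and "is_partition lam" and "is_partition mu"
    and "young mu \<subseteq> young lam"
    and "\<forall>j. card {i. (i, j) \<in> skew lam mu} \<le> n"
    and "beta \<noteq> 0"
  shows "groth (skew lam mu) n (\<lambda>_. beta) (- 1 / beta) = beta ^ card (skew lam mu)"
proof -
  let ?th = "skew lam mu"
  have fin: "finite ?th" unfolding skew_def using young_finite by blast
  have PP: "PP ?th" using skew_PP assms(3) by blast
  have tm: "(- 1 / beta) ^ (tsize ?th T - card ?th) * (\<Prod>k=1..n. beta ^ omega ?th T k)
        = beta ^ card ?th * of_int (sg ?th T)" if T: "T \<in> SVT ?th n" for T
  proof -
    have prodeq: "(\<Prod>k=1..n. beta ^ omega ?th T k) = beta ^ tsize ?th T"
      using omega_sum[OF T fin] power_sum[of beta "omega ?th T" "{1..n}"] by simp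
    have ge: "card ?th \<le> tsize ?th T" using tsize_ge T fin by blast
    define k where "k = tsize ?th T - card ?th"
    have tk: "tsize ?th T = k + card ?th" unfolding k_def using ge by simp
    have pk: "(- 1 / beta) ^ k * beta ^ k = (-1) ^ k"
      using assms(6) by (simp add: power_mult_distrib[symmetric])
    have "(- 1 / beta) ^ (tsize ?th T - card ?th) * (\<Prod>k=1..n. beta ^ omega ?th T k)
        = (- 1 / beta) ^ k * (beta ^ k * beta ^ card ?th)"
      unfolding k_def[symmetric] prodeq tk power_add by simp
    also have "\<dots> = ((- 1 / beta) ^ k * beta ^ k) * beta ^ card ?th"
      by (simp only: mult.assoc)
    also have "\<dots> = beta ^ card ?th * of_int (sg ?th T)"
      unfolding pk sg_def k_def[symmetric] by simp
    finally show ?thesis .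
  qed
  have "groth ?th n (\<lambda>_. beta) (- 1 / beta) = (\<Sum>T\<in>SVT ?th n. beta ^ card ?th * of_int (sg ?th T))"
    unfolding groth_def by (rule sum.cong) (use tm in auto)
  also have "\<dots> = beta ^ card ?th * of_int (\<Sum>T\<in>SVT ?th n. sg ?th T)"
    by (simp add: sum_distrib_left)
  also have "(\<Sum>T\<in>SVT ?th n. sg ?th T) = 1" using main_sum[OF fin PP assms(5)] .
  finally show ?thesis by simp
qed

end
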